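(* Let $C$ be an $n\times n$ lower-triangular Toeplitz matrix whose diagonal entries satisfy $c_0\ge c_1\ge\cdots\ge c_{n-1}\ge0$ (entry $(i,j)$ equals $c_{i-j}$ for $i\ge j$). Let $k,b\ge1$ be integers with $(k-1)b\le n-1$. Then $$\mathrm{sens}_{k,b}(C)^2\le k\,\|C\|_{1\to2}^2+\frac{k}{b}\,\|C\|_{1\to1}^2 .$$
   Context: For an $n\times n$ matrix $C$ and integers $k,b\ge1$ with $(k-1)b\le n-1$, $\mathrm{sens}_{k,b}(C):=\bigl\|\sum_{j=0}^{k-1}C_{[\cdot,jb]}\bigr\|_2$, where $C_{[\cdot,m]}$ is the $m$-th column of $C$ with columns indexed from $0$; for $C$ as in the claim this equals $\sqrt{\sum_{i=0}^{n-1}\bigl[\sum_{j=0}^{\min(k-1,\lfloor i/b\rfloor)}c_{i-jb}\bigr]^2}$ and is the sensitivity under $b$-min-separated participation. For a matrix $M$, $\|M\|_{1\to1}$ is the maximum $\ell_1$ norm of a column of $M$ and $\|M\|_{1\to2}$ is the maximum $\ell_2$ norm of a column of $M$. *)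

theory Defs
  imports Complex_Main
begin

text \<open>An n x n real matrix is represented as a function nat => nat => real,
  entry (i,j) with 0 <= i,j < n (rows i, columns j, indexed from 0).\<close>

definition lower_toeplitz :: "(nat \<Rightarrow> real) \<Rightarrow> nat \<Rightarrow> nat \<Rightarrow> real" where
  "lower_toeplitz c i j = (if j \<le> i then c (i - j) else 0)"

definition col_l1 :: "nat \<Rightarrow> (nat \<Rightarrow> nat \<Rightarrow> real) \<Rightarrow> nat \<Rightarrow> real" where
  "col_l1 n M m = (\<Sum>i<n. \<bar>M i m\<bar>)"

definition col_l2 :: "nat \<Rightarrow> (nat \<Rightarrow> nat \<Rightarrow> real) \<Rightarrow> nat \<Rightarrow> real" where
  "col_l2 n M m = sqrt (\<Sum>i<n. (M i m)^2)"

text \<open>Operator norms ||M||_{1->1} and ||M||_{1->2}: maximal column norms.\<close>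
definition norm_1_1 :: "nat \<Rightarrow> (nat \<Rightarrow> nat \<Rightarrow> real) \<Rightarrow> real" where
  "norm_1_1 n M = Max ((\<lambda>m. col_l1 n M m) ` {..<n})"

definition norm_1_2 :: "nat \<Rightarrow> (nat \<Rightarrow> nat \<Rightarrow> real) \<Rightarrow> real" where
  "norm_1_2 n M = Max ((\<lambda>m. col_l2 n M m) ` {..<n})"

definition sens :: "nat \<Rightarrow> nat \<Rightarrow> nat \<Rightarrow> (nat \<Rightarrow> nat \<Rightarrow> real) \<Rightarrow> real" where
  "sens n k b M = sqrt (\<Sum>i<n. (\<Sum>j<k. M i (j * b))^2)"

end

theory Submission imports Defs begin

lemma L1:
  fixes e :: "nat \<Rightarrow> real" and b :: nat
  assumes anti: "\<And>s t. s \<le> t \<Longrightarrow> e t \<le> e s"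
  shows "real b * (\<Sum>j'<j. e (u + (j - j') * b)) \<le> (\<Sum>s\<in>{Suc u..<Suc u + j * b}. e s)"
proof (induction j)
  case 0 then show ?case by simp
next
  case (Suc j)
  have blk: "real b * e (u + Suc j * b) \<le> (\<Sum>s\<in>{Suc u + j*b..<Suc u + j*b + b}. e s)"
  proof -
    have "(\<Sum>s\<in>{Suc u + j*b..<Suc u + j*b + b}. e (u + Suc j * b)) \<le> (\<Sum>s\<in>{Suc u + j*b..<Suc u + j*b + b}. e s)"
      by (rule sum_mono) (auto intro: anti)
    then show ?thesis by simp
  qed
  have "(\<Sum>j'<Suc j. e (u + (Suc j - j') * b)) = e (u + Suc j * b) + (\<Sum>j'<j. e (u + (j - j') * b))"
    by (subst sum.lessThan_Suc_shift) simp
  hence "real b * (\<Sum>j'<Suc j. e (u + (Suc j - j') * b)) = real b * e (u + Suc j * b) + real b * (\<Sum>j'<j. e (u + (j - j') * b))"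
    by (simp add: algebra_simps)
  also have "\<dots> \<le> (\<Sum>s\<in>{Suc u + j*b..<Suc u + j*b + b}. e s) + (\<Sum>s\<in>{Suc u..<Suc u + j * b}. e s)"
    using blk Suc.IH by linarith
  also have "\<dots> = (\<Sum>s\<in>{Suc u..<Suc u + Suc j * b}. e s)"
    using sum.atLeastLessThan_concat[of "Suc u" "Suc u + j*b" "Suc u + j*b + b" e]
    by (simp add: algebra_simps)
  finally show ?case .
qed

lemma L1b:
  fixes e :: "nat \<Rightarrow> real"
  assumes nn: "\<And>s. 0 \<le> e s" and z: "\<And>s. n \<le> s \<Longrightarrow> e s = 0"
  shows "(\<Sum>s\<in>{a..<M}. e s) \<le> (\<Sum>s\<in>{a..<n}. e s)"
proof -
  have "(\<Sum>s\<in>{a..<M}. e s) = (\<Sum>s\<in>{a..<M} \<inter> {..<n}. e s)"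
    by (rule sum.mono_neutral_right) (auto intro: z)
  also have "\<dots> \<le> (\<Sum>s\<in>{a..<n}. e s)"
    by (rule sum_mono2) (auto intro: nn)
  finally show ?thesis .
qed

lemma L2:
  fixes e :: "nat \<Rightarrow> real"
  assumes nn: "\<And>s. 0 \<le> e s"
  shows "2 * (\<Sum>u<m. e u * (\<Sum>s\<in>{Suc u..<m}. e s)) \<le> (\<Sum>u<m. e u)^2"
proof (induction m)
  case 0 then show ?case by simp
next
  case (Suc m)
  have "(\<Sum>u<Suc m. e u * (\<Sum>s\<in>{Suc u..<Suc m}. e s)) = (\<Sum>u<m. e u * (\<Sum>s\<in>{Suc u..<Suc m}. e s))"
    by simp
  also have "\<dots> = (\<Sum>u<m. e u * (\<Sum>s\<in>{Suc u..<m}. e s) + e u * e m)"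
    by (rule sum.cong) (auto simp: algebra_simps)
  also have "\<dots> = (\<Sum>u<m. e u * (\<Sum>s\<in>{Suc u..<m}. e s)) + (\<Sum>u<m. e u) * e m"
    by (simp add: sum.distrib sum_distrib_right)
  finally have eq: "(\<Sum>u<Suc m. e u * (\<Sum>s\<in>{Suc u..<Suc m}. e s)) = (\<Sum>u<m. e u * (\<Sum>s\<in>{Suc u..<m}. e s)) + (\<Sum>u<m. e u) * e m" .
  have "(\<Sum>u<Suc m. e u)^2 = (\<Sum>u<m. e u)^2 + 2 * (\<Sum>u<m. e u) * e m + (e m)^2"
    by (simp add: power2_eq_square algebra_simps)
  moreover have "0 \<le> (e m)^2" by simp
  ultimately show ?case using eq Suc.IH by linarith
qed

lemma L3:
  fixes x :: "nat \<Rightarrow> real"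
  shows "(\<Sum>j<k. x j)^2 = (\<Sum>j<k. (x j)^2 + 2 * x j * (\<Sum>j'<j. x j'))"
  by (induction k) (simp_all add: power2_eq_square algebra_simps)

lemma L4:
  fixes g :: "nat \<Rightarrow> real"
  shows "(\<Sum>i<n. if m \<le> i then g (i - m) else 0) = (\<Sum>u<n - m. g u)"
  by (induction n) (auto simp: Suc_diff_le not_less_eq_eq)

theorem mainTheorem2:
  fixes n k b :: nat and c :: "nat \<Rightarrow> real"
  assumes "n \<ge> 1"
    and mono: "\<And>i j. i \<le> j \<Longrightarrow> j < n \<Longrightarrow> c j \<le> c i"
    and nonneg: "\<And>i. i < n \<Longrightarrow> c i \<ge> 0"
    and "k \<ge> 1" and "b \<ge> 1"
    and "(k - 1) * b \<le> n - 1"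
  shows "(sens n k b (lower_toeplitz c))^2
           \<le> real k * (norm_1_2 n (lower_toeplitz c))^2
             + real k / real b * (norm_1_1 n (lower_toeplitz c))^2"
proof -
  define e where "e s = (if s < n then c s else 0)" for s
  have enn: "\<And>s. 0 \<le> e s" using nonneg by (simp add: e_def)
  have ez: "\<And>s. n \<le> s \<Longrightarrow> e s = 0" by (simp add: e_def)
  have anti: "\<And>s t. s \<le> t \<Longrightarrow> e t \<le> e s"
    using mono nonneg by (auto simp: e_def)
  define M where "M = lower_toeplitz c"
  define x where "x i j = (if j * b \<le> i then e (i - j * b) else 0)" for i j
  define T where "T u = (\<Sum>s\<in>{Suc u..<n}. e s)" for u
  define g where "g u = (e u)^2 + 2 / real b * (e u * T u)" for u
  define A where "A = (\<Sum>u<n. (e u)^2)"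
  define S where "S = (\<Sum>u<n. e u)"
  have xnn: "\<And>i j. 0 \<le> x i j" using enn by (simp add: x_def)
  have Mx: "\<And>i j. i < n \<Longrightarrow> M i (j * b) = x i j"
    by (auto simp: M_def x_def lower_toeplitz_def e_def)
  have bpos: "real b > 0" using assms(5) by simp
  have stepB: "(x i j)^2 + 2 * x i j * (\<Sum>j'<j. x i j') \<le> (if j * b \<le> i then g (i - j * b) else 0)" for i j
  proof (cases "j * b \<le> i")
    case True
    define u where "u = i - j * b"
    have xs_eq: "(\<Sum>j'<j. x i j') = (\<Sum>j'<j. e (u + (j - j') * b))"
    proof (rule sum.cong)
      fix j' assume "j' \<in> {..<j}"
      hence "j' < j" by simp
      hence "j' * b \<le> j * b" by simp
      moreover have "(j - j') * b = j * b - j' * b" by (simp add: diff_mult_distrib)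
      ultimately have "i - j' * b = u + (j - j') * b" using True u_def by simp
      moreover have "j' * b \<le> i" using \<open>j' * b \<le> j * b\<close> True by linarith
      ultimately show "x i j' = e (u + (j - j') * b)" by (simp add: x_def)
    qed simp
    have "real b * (\<Sum>j'<j. x i j') \<le> (\<Sum>s\<in>{Suc u..<Suc u + j * b}. e s)"
      unfolding xs_eq by (rule L1) (rule anti)
    also have "\<dots> \<le> T u" unfolding T_def by (rule L1b) (auto intro: enn ez)
    finally have "real b * (\<Sum>j'<j. x i j') \<le> T u" .
    hence le: "(\<Sum>j'<j. x i j') \<le> T u / real b" using bpos by (simp add: field_simps)
    have xe: "x i j = e u" using True by (simp add: x_def u_def)
    have "2 * x i j * (\<Sum>j'<j. x i j') \<le> 2 * x i j * (T u / real b)"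
      using le xnn[of i j] by (intro mult_left_mono) auto
    also have "\<dots> = 2 / real b * (e u * T u)" using xe by simp
    finally show ?thesis using True by (simp add: g_def u_def xe)
  next
    case False
    then show ?thesis by (simp add: x_def)
  qed
  have "(sens n k b M)^2 = (\<Sum>i<n. (\<Sum>j<k. M i (j * b))^2)"
    unfolding sens_def by (simp add: sum_nonneg)
  also have "\<dots> = (\<Sum>i<n. (\<Sum>j<k. x i j)^2)"
    by (rule sum.cong) (simp_all add: Mx)
  also have "\<dots> = (\<Sum>i<n. \<Sum>j<k. (x i j)^2 + 2 * x i j * (\<Sum>j'<j. x i j'))"
    by (simp add: L3)
  also have "\<dots> \<le> (\<Sum>i<n. \<Sum>j<k. (if j * b \<le> i then g (i - j * b) else 0))"
    by (intro sum_mono stepB)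
  also have "\<dots> = (\<Sum>j<k. \<Sum>i<n. (if j * b \<le> i then g (i - j * b) else 0))"
    by (rule sum.swap)
  also have "\<dots> = (\<Sum>j<k. \<Sum>u<n - j * b. g u)"
    by (simp add: L4)
  also have "\<dots> \<le> (\<Sum>j<k. \<Sum>u<n. g u)"
  proof (intro sum_mono sum_mono2)
    fix j u show "0 \<le> g u" using enn unfolding g_def T_def
      by (intro add_nonneg_nonneg mult_nonneg_nonneg sum_nonneg) auto
  qed auto
  also have "\<dots> = real k * (\<Sum>u<n. g u)" by simp
  also have "(\<Sum>u<n. g u) = A + 2 / real b * (\<Sum>u<n. e u * T u)"
    by (simp add: g_def A_def sum.distrib sum_distrib_left)
  also have "2 / real b * (\<Sum>u<n. e u * T u) \<le> S^2 / real b"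
  proof -
    have "2 * (\<Sum>u<n. e u * T u) \<le> S^2" unfolding T_def S_def by (rule L2) (rule enn)
    thus ?thesis using bpos by (simp add: divide_right_mono)
  qed
  hence "real k * (A + 2 / real b * (\<Sum>u<n. e u * T u)) \<le> real k * (A + S^2 / real b)"
    by (intro mult_left_mono) auto
  finally have main: "(sens n k b M)^2 \<le> real k * A + real k / real b * S^2"
    by (simp add: algebra_simps)
  have n0: "0 \<in> {..<n}" using assms(1) by simp
  have c2: "col_l2 n M 0 = sqrt A"
    by (simp add: col_l2_def A_def M_def lower_toeplitz_def e_def)
  have c1: "col_l1 n M 0 = S"
    unfolding col_l1_def S_def M_def lower_toeplitz_def e_def
    by (rule sum.cong) (auto simp: nonneg)
  have "sqrt A \<le> norm_1_2 n M"
    unfolding norm_1_2_def using n0 c2 by (intro Max_ge) (simp, metis image_eqI)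
  moreover have "0 \<le> sqrt A" unfolding A_def by (simp add: sum_nonneg)
  ultimately have "(sqrt A)^2 \<le> (norm_1_2 n M)^2" by (intro power_mono) auto
  hence hA: "A \<le> (norm_1_2 n M)^2" unfolding A_def by (simp add: sum_nonneg)
  have "S \<le> norm_1_1 n M"
    unfolding norm_1_1_def using n0 c1 by (intro Max_ge) (simp, metis image_eqI)
  moreover have "0 \<le> S" unfolding S_def using enn by (simp add: sum_nonneg)
  ultimately have hS: "S^2 \<le> (norm_1_1 n M)^2" by (intro power_mono) auto
  have "real k * A \<le> real k * (norm_1_2 n M)^2" using hA by (intro mult_left_mono) auto
  moreover have "real k / real b * S^2 \<le> real k / real b * (norm_1_1 n M)^2"
    using hS by (intro mult_left_mono) auto
  ultimately show ?thesis using main unfolding M_def by linarith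
qed

end
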